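(* Let $P$ be an online abstract network design problem. Consider an instance of $P$ on a tree metric $(T,d_T)$ with request sequence $Z_1,\ldots,Z_r$, and let $T_i=T[\mathcal Z_i]$ be the subtree of $T$ induced by $\mathcal Z_i=Z_1\cup\cdots\cup Z_i$. Then for any feasible solution $\mathcal S=((R_1,C_1),\ldots,(R_r,C_r))$ there exists a feasible solution $\mathcal S'=((R'_1,C_1),\ldots,(R'_r,C_r))$ such that each $R'_i$ is contained in $T_i$ and $\mathrm{cost}(\mathcal S')\le\mathrm{cost}(\mathcal S)$.
   Context: Abstract network design: an instance consists of a graph (here the edge-weighted tree $T$ with lengths $d_T$) and online requests $Z_i$ of terminals; a solution is a sequence of responses $(R_i,C_i)$ with $R_i$ a set of edges and $C_i$ an ordered list of pairs from $\binom{\mathcal Z_i}{2}$. Given feasibility functions $\mathcal F_i$, the solution is feasible iff for each $i$, $\mathcal F_i(C_1,\ldots,C_i)=1$ and each pair of $C_j$ is connected in $R_j$ for all $j\le i$. Load function $\rho$ on subsets of time steps is subadditive, monotone increasing, and zero exactly on $\emptyset$; the cost is $\sum_{e}d_T(e)\rho(\{j: e\in R_j\})$. $T[\mathcal Z_i]$ is the minimal subtree of $T$ containing $\mathcal Z_i$. *)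

theory Defs
  imports Complex_Main
begin

definition walk_in :: "'a set set \<Rightarrow> 'a list \<Rightarrow> bool" where
  "walk_in F p \<longleftrightarrow> p \<noteq> [] \<and> (\<forall>k < length p - 1. {p ! k, p ! Suc k} \<in> F)"

definition connected_in :: "'a set set \<Rightarrow> 'a \<Rightarrow> 'a \<Rightarrow> bool" where
  "connected_in F u v \<longleftrightarrow> (\<exists>p. walk_in F p \<and> hd p = u \<and> last p = v)"

definition has_cycle :: "'a set set \<Rightarrow> bool" where
  "has_cycle E \<longleftrightarrow> (\<exists>p. length p \<ge> 3 \<and> distinct p \<and> walk_in E p \<and> {last p, hd p} \<in> E)"

definition is_tree :: "'a set \<Rightarrow> 'a set set \<Rightarrow> bool" where
  "is_tree V E \<longleftrightarrow> finite V \<and> V \<noteq> {} \<and> (\<forall>e\<in>E. e \<subseteq> V \<and> card e = 2)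
     \<and> (\<forall>u\<in>V. \<forall>v\<in>V. connected_in E u v) \<and> \<not> has_cycle E"

text \<open>Edge set of the minimal subtree T[Z] of T containing Z: the edges common to
  every edge set of T connecting all of Z (in a tree this is exactly the union of
  the paths between vertices of Z).\<close>
definition min_subtree :: "'a set set \<Rightarrow> 'a set \<Rightarrow> 'a set set" where
  "min_subtree E Z = \<Inter> {F. F \<subseteq> E \<and> (\<forall>u\<in>Z. \<forall>v\<in>Z. connected_in F u v)}"

definition Zcum :: "(nat \<Rightarrow> 'a set) \<Rightarrow> nat \<Rightarrow> 'a set" where
  "Zcum Z i = (\<Union>j\<in>{1..i}. Z j)"

definition load_fun :: "nat \<Rightarrow> (nat set \<Rightarrow> real) \<Rightarrow> bool" where
  "load_fun r \<rho> \<longleftrightarrow>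
     (\<forall>A B. A \<subseteq> {1..r} \<longrightarrow> B \<subseteq> {1..r} \<longrightarrow> \<rho> (A \<union> B) \<le> \<rho> A + \<rho> B)
   \<and> (\<forall>A B. A \<subseteq> B \<longrightarrow> B \<subseteq> {1..r} \<longrightarrow> \<rho> A \<le> \<rho> B)
   \<and> (\<forall>A. A \<subseteq> {1..r} \<longrightarrow> (\<rho> A = 0 \<longleftrightarrow> A = {}))"

definition is_solution :: "'a set set \<Rightarrow> (nat \<Rightarrow> 'a set) \<Rightarrow> nat
    \<Rightarrow> (nat \<Rightarrow> 'a set set) \<Rightarrow> (nat \<Rightarrow> 'a set list) \<Rightarrow> bool" where
  "is_solution E Z r R C \<longleftrightarrow> (\<forall>i\<in>{1..r}. R i \<subseteq> E \<and>
      (\<forall>p\<in>set (C i). p \<subseteq> Zcum Z i \<and> card p = 2))"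

definition feasible :: "(nat \<Rightarrow> 'a set list list \<Rightarrow> bool) \<Rightarrow> 'a set set \<Rightarrow> (nat \<Rightarrow> 'a set) \<Rightarrow> nat
    \<Rightarrow> (nat \<Rightarrow> 'a set set) \<Rightarrow> (nat \<Rightarrow> 'a set list) \<Rightarrow> bool" where
  "feasible \<F> E Z r R C \<longleftrightarrow> is_solution E Z r R C \<and>
     (\<forall>i\<in>{1..r}. \<F> i (map C [1..<Suc i]) \<and>
        (\<forall>j\<in>{1..i}. \<forall>p\<in>set (C j). \<exists>u v. p = {u, v} \<and> connected_in (R j) u v))"

definition cost :: "'a set set \<Rightarrow> ('a set \<Rightarrow> real) \<Rightarrow> (nat set \<Rightarrow> real) \<Rightarrow> nat
    \<Rightarrow> (nat \<Rightarrow> 'a set set) \<Rightarrow> real" where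
  "cost E d \<rho> r R = (\<Sum>e\<in>E. d e * \<rho> {j\<in>{1..r}. e \<in> R j})"

end

theory Submission
  imports Defs
begin

lemma walk_Nil[simp]: "\<not> walk_in F []"
  by (simp add: walk_in_def)

lemma walk_single[simp]: "walk_in F [x]"
  by (simp add: walk_in_def)

lemma walk_Cons2[simp]: "walk_in F (x # y # p) \<longleftrightarrow> {x, y} \<in> F \<and> walk_in F (y # p)"
proof
  assume a: "walk_in F (x # y # p)"
  then have "{x,y} \<in> F" by (auto simp: walk_in_def)
  moreover have "walk_in F (y # p)"
    unfolding walk_in_def
  proof (intro conjI allI impI)
    fix k assume "k < length (y # p) - 1"
    then have "Suc k < length (x # y # p) - 1" by simp
    with a have "{(x#y#p) ! Suc k, (x#y#p) ! Suc (Suc k)} \<in> F" unfolding walk_in_def by blast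
    then show "{(y # p) ! k, (y # p) ! Suc k} \<in> F" by simp
  qed simp
  ultimately show "{x, y} \<in> F \<and> walk_in F (y # p)" by blast
next
  assume a: "{x, y} \<in> F \<and> walk_in F (y # p)"
  show "walk_in F (x # y # p)"
    unfolding walk_in_def
  proof (intro conjI allI impI)
    fix k assume k: "k < length (x # y # p) - 1"
    show "{(x # y # p) ! k, (x # y # p) ! Suc k} \<in> F"
    proof (cases k)
      case 0 then show ?thesis using a by simp
    next
      case (Suc m)
      then have "m < length (y # p) - 1" using k by simp
      with a have "{(y#p) ! m, (y#p) ! Suc m} \<in> F" unfolding walk_in_def by blast
      then show ?thesis using Suc by simp
    qed
  qed simp
qed

lemma walk_append:
  assumes "p \<noteq> []" "q \<noteq> []"
  shows "walk_in F (p @ q) \<longleftrightarrow> walk_in F p \<and> walk_in F q \<and> {last p, hd q} \<in> F"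
  using assms
proof (induction p)
  case Nil then show ?case by simp
next
  case (Cons x p)
  show ?case
  proof (cases p)
    case Nil
    then show ?thesis using Cons.prems by (cases q) auto
  next
    case (Cons y p')
    then show ?thesis using Cons.IH Cons.prems by auto
  qed
qed

lemma walk_rev: "walk_in F p \<Longrightarrow> walk_in F (rev p)"
proof (induction p rule: induct_list012)
  case 1 then show ?case by simp
next
  case (2 x) then show ?case by simp
next
  case (3 x y p)
  have "walk_in F (rev (y # p) @ [x])"
    using 3 by (subst walk_append) (auto simp: insert_commute)
  then show ?case by simp
qed

lemma walk_mono: "walk_in F p \<Longrightarrow> F \<subseteq> G \<Longrightarrow> walk_in G p"
  unfolding walk_in_def by blast

lemma conn_mono: "connected_in F u v \<Longrightarrow> F \<subseteq> G \<Longrightarrow> connected_in G u v"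
  unfolding connected_in_def using walk_mono by blast

lemma conn_sym: "connected_in F u v \<Longrightarrow> connected_in F v u"
  unfolding connected_in_def
  by (metis walk_rev hd_rev last_rev)

lemma conn_trans: "connected_in F u v \<Longrightarrow> connected_in F v w \<Longrightarrow> connected_in F u w"
proof -
  assume "connected_in F u v" "connected_in F v w"
  then obtain p q where p: "walk_in F p" "hd p = u" "last p = v"
    and q: "walk_in F q" "hd q = v" "last q = w" unfolding connected_in_def by blast
  show ?thesis
  proof (cases "tl q = []")
    case True
    then have "q = [v]" using q by (cases q) auto
    then show ?thesis using p q unfolding connected_in_def by auto
  next
    case False
    have qq: "q = hd q # tl q" using q(1) by (cases q) auto
    have "walk_in F (p @ tl q)"
    proof (subst walk_append)
      show "p \<noteq> []" using p by auto
      show "tl q \<noteq> []" by fact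
      have "walk_in F (hd q # tl q)" using q(1) qq by simp
      then have "walk_in F ([hd q] @ tl q)" by simp
      then show "walk_in F p \<and> walk_in F (tl q) \<and> {last p, hd (tl q)} \<in> F"
        using p q False by (subst (asm) walk_append) auto
    qed
    moreover have "hd (p @ tl q) = u" using p by (cases p) auto
    moreover have "last (p @ tl q) = w" using False q qq by (metis last_ConsR last_append)
    ultimately show ?thesis unfolding connected_in_def by blast
  qed
qed

lemma walk_suffix: "walk_in F (xs @ ys) \<Longrightarrow> ys \<noteq> [] \<Longrightarrow> walk_in F ys"
  by (cases "xs = []") (use walk_append[of xs ys F] in auto)

lemma walk_prefix: "walk_in F (xs @ ys) \<Longrightarrow> xs \<noteq> [] \<Longrightarrow> walk_in F xs"
  by (cases "ys = []") (use walk_append[of xs ys F] in auto)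

lemma conn_distinct:
  "walk_in F p \<Longrightarrow> \<exists>q. walk_in F q \<and> distinct q \<and> hd q = hd p \<and> last q = last p"
proof (induction "length p" arbitrary: p rule: less_induct)
  case less
  show ?case
  proof (cases "distinct p")
    case True then show ?thesis using less by blast
  next
    case False
    then obtain xs ys zs x where p: "p = xs @ x # ys @ x # zs"
      using not_distinct_decomp[OF False] by auto
    have w1: "walk_in F (x # ys @ x # zs)"
      using less(2) p walk_suffix[of F xs "x # ys @ x # zs"] by simp
    have "walk_in F ((x # ys) @ (x # zs))" using w1 by simp
    then have w2: "walk_in F (x # zs)" by (subst (asm) walk_append) auto
    have w3: "walk_in F (xs @ x # zs)"
    proof (cases xs)
      case Nil then show ?thesis using w2 by simp
    next
      case (Cons a l)
      then have ne: "xs \<noteq> []" by simp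
      have "walk_in F xs \<and> {last xs, x} \<in> F"
        using walk_append[OF ne, of "x # ys @ x # zs" F] less(2) p by simp
      then show ?thesis using walk_append[OF ne, of "x # zs" F] w2 by simp
    qed
    have "length (xs @ x # zs) < length p" using p by simp
    from less(1)[OF this w3] obtain q where
      "walk_in F q" "distinct q" "hd q = hd (xs @ x # zs)" "last q = last (xs @ x # zs)" by blast
    moreover have "hd (xs @ x # zs) = hd p" using p by (cases xs) auto
    moreover have "last (xs @ x # zs) = last p" using p by (cases zs) auto
    ultimately show ?thesis by metis
  qed
qed

lemma walk_avoid: "walk_in F q \<Longrightarrow> b \<notin> set q \<Longrightarrow> walk_in {e\<in>F. b \<notin> e} q"
  unfolding walk_in_def by auto

lemma key:
  assumes nc: "\<not> has_cycle E"
    and FE: "F \<subseteq> E"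
    and Fc: "connected_in F u v"
    and pw: "walk_in E (xs @ a # b # ys)" and pd: "distinct (xs @ a # b # ys)"
    and hd: "hd (xs @ a # b # ys) = u" and lst: "last (xs @ a # b # ys) = v"
  shows "{a, b} \<in> F"
proof (rule ccontr)
  assume nF: "{a,b} \<notin> F"
  let ?G = "E - {{a,b}}"
  have ab: "a \<noteq> b" using pd by auto
  have "walk_in E (a # b # ys)" using walk_suffix[OF pw] by simp
  then have eab: "{a,b} \<in> E" by simp
  have w1: "walk_in E (xs @ [a])" using walk_prefix[of E "xs @ [a]" "b # ys"] pw by simp
  have w2: "walk_in E (b # ys)" using walk_suffix[of E "xs @ [a]" "b # ys"] pw by simp
  have "b \<notin> set (xs @ [a])" using pd by auto
  from walk_avoid[OF w1 this] have "walk_in ?G (xs @ [a])" by (rule walk_mono) auto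
  then have c1: "connected_in ?G u a" unfolding connected_in_def using hd
    by (intro exI[of _ "xs @ [a]"]) (cases xs, auto)
  have "a \<notin> set (b # ys)" using pd by auto
  from walk_avoid[OF w2 this] have "walk_in ?G (b # ys)" by (rule walk_mono) auto
  then have c2: "connected_in ?G b v" unfolding connected_in_def using lst
    by (intro exI[of _ "b # ys"]) (cases ys, auto)
  have c3: "connected_in ?G u v" using Fc FE nF by (rule_tac conn_mono) auto
  have "connected_in ?G a b"
    using conn_trans[OF conn_trans[OF conn_sym[OF c1] c3] conn_sym[OF c2]] .
  then obtain q0 where "walk_in ?G q0" "hd q0 = a" "last q0 = b" unfolding connected_in_def by blast
  from conn_distinct[OF this(1)] this obtain q where
    q: "walk_in ?G q" "distinct q" "hd q = a" "last q = b" by auto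
  obtain q1 where q1: "q = a # q1" using q by (cases q) auto
  obtain c q2 where q2: "q1 = c # q2" using q q1 ab by (cases q1) auto
  have "q2 \<noteq> []"
  proof
    assume "q2 = []"
    then have "q = [a, b]" using q q1 q2 by simp
    then show False using q(1) by simp
  qed
  then have "length q \<ge> 3" using q1 q2 by (cases q2) auto
  moreover have "walk_in E q" using q(1) by (rule walk_mono) auto
  moreover have "{last q, hd q} \<in> E" using q eab by (simp add: insert_commute)
  ultimately have "has_cycle E" unfolding has_cycle_def using q(2) by blast
  then show False using nc by blast
qed

theorem proposition3p3:
  fixes V :: "'a set" and E :: "'a set set" and d :: "'a set \<Rightarrow> real"
    and \<rho> :: "nat set \<Rightarrow> real" and \<F> :: "nat \<Rightarrow> 'a set list list \<Rightarrow> bool"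
    and Z :: "nat \<Rightarrow> 'a set" and r :: nat
    and R :: "nat \<Rightarrow> 'a set set" and C :: "nat \<Rightarrow> 'a set list"
  assumes tree: "is_tree V E"
    and lengths: "\<forall>e\<in>E. d e \<ge> 0"
    and load: "load_fun r \<rho>"
    and requests: "\<forall>i\<in>{1..r}. Z i \<subseteq> V"
    and feas: "feasible \<F> E Z r R C"
  shows "\<exists>R'. feasible \<F> E Z r R' C
            \<and> (\<forall>i\<in>{1..r}. R' i \<subseteq> min_subtree E (Zcum Z i))
            \<and> cost E d \<rho> r R' \<le> cost E d \<rho> r R"
proof -
  define R' where "R' i = R i \<inter> min_subtree E (Zcum Z i)" for i
  have nc: "\<not> has_cycle E" using tree unfolding is_tree_def by blast
  have sol: "is_solution E Z r R C" using feas unfolding feasible_def by blast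
  have conn: "connected_in (R' j) u v"
    if j: "j \<in> {1..r}" and p: "p \<in> set (C j)" and pe: "p = {u, v}"
      and cR: "connected_in (R j) u v" for j p u v
  proof -
    have RE: "R j \<subseteq> E" using sol j unfolding is_solution_def by blast
    have "\<forall>p\<in>set (C j). p \<subseteq> Zcum Z j \<and> card p = 2" using sol j unfolding is_solution_def by blast
    then have uv: "u \<in> Zcum Z j" "v \<in> Zcum Z j" using p pe by auto
    obtain q0 where "walk_in (R j) q0" "hd q0 = u" "last q0 = v"
      using cR unfolding connected_in_def by blast
    from conn_distinct[OF this(1)] this obtain q where
      q: "walk_in (R j) q" "distinct q" "hd q = u" "last q = v" by auto
    have "walk_in (R' j) q"
      unfolding walk_in_def R'_def
    proof (intro conjI allI impI IntI)
      show "q \<noteq> []" using q by auto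
      fix k assume k: "k < length q - 1"
      show "{q ! k, q ! Suc k} \<in> R j" using q(1) k unfolding walk_in_def by blast
      show "{q ! k, q ! Suc k} \<in> min_subtree E (Zcum Z j)"
        unfolding min_subtree_def
      proof
        fix F assume F: "F \<in> {F. F \<subseteq> E \<and> (\<forall>u\<in>Zcum Z j. \<forall>v\<in>Zcum Z j. connected_in F u v)}"
        have qs: "q = take k q @ q ! k # q ! Suc k # drop (Suc (Suc k)) q"
          using k by (simp add: Cons_nth_drop_Suc)
        show "{q ! k, q ! Suc k} \<in> F"
        proof (rule key[OF nc _ _ _ _ _ _])
          show "F \<subseteq> E" using F by blast
          show "connected_in F u v" using F uv by blast
          show "walk_in E (take k q @ q ! k # q ! Suc k # drop (Suc (Suc k)) q)"
            unfolding qs[symmetric] by (rule walk_mono[OF q(1) RE])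
          show "distinct (take k q @ q ! k # q ! Suc k # drop (Suc (Suc k)) q)"
            unfolding qs[symmetric] by (rule q(2))
          show "hd (take k q @ q ! k # q ! Suc k # drop (Suc (Suc k)) q) = u"
            unfolding qs[symmetric] by (rule q(3))
          show "last (take k q @ q ! k # q ! Suc k # drop (Suc (Suc k)) q) = v"
            unfolding qs[symmetric] by (rule q(4))
        qed
      qed
    qed
    then show ?thesis unfolding connected_in_def using q by blast
  qed
  have "feasible \<F> E Z r R' C"
    unfolding feasible_def
  proof (intro conjI ballI)
    show "is_solution E Z r R' C" using sol unfolding is_solution_def R'_def by blast
  next
    fix i assume i: "i \<in> {1..r}"
    show "\<F> i (map C [1..<Suc i])" using feas i unfolding feasible_def by blast
  next
    fix i j p assume i: "i \<in> {1..r}" and j: "j \<in> {1..i}" and p: "p \<in> set (C j)"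
    then obtain u v where "p = {u, v}" "connected_in (R j) u v"
      using feas unfolding feasible_def by blast
    moreover have "j \<in> {1..r}" using i j by auto
    ultimately show "\<exists>u v. p = {u, v} \<and> connected_in (R' j) u v"
      using conn p by blast
  qed
  moreover have "\<forall>i\<in>{1..r}. R' i \<subseteq> min_subtree E (Zcum Z i)" unfolding R'_def by blast
  moreover have "cost E d \<rho> r R' \<le> cost E d \<rho> r R"
    unfolding cost_def
  proof (rule sum_mono)
    fix e assume e: "e \<in> E"
    have "\<rho> {j\<in>{1..r}. e \<in> R' j} \<le> \<rho> {j\<in>{1..r}. e \<in> R j}"
    proof -
      have mono: "\<forall>A B. A \<subseteq> B \<longrightarrow> B \<subseteq> {1..r} \<longrightarrow> \<rho> A \<le> \<rho> B"
        using load unfolding load_fun_def by blast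
      have "{j\<in>{1..r}. e \<in> R' j} \<subseteq> {j\<in>{1..r}. e \<in> R j}" unfolding R'_def by blast
      moreover have "{j\<in>{1..r}. e \<in> R j} \<subseteq> {1..r}" by blast
      ultimately show ?thesis using mono by blast
    qed
    then show "d e * \<rho> {j\<in>{1..r}. e \<in> R' j} \<le> d e * \<rho> {j\<in>{1..r}. e \<in> R j}"
      using lengths e by (simp add: mult_left_mono)
  qed
  ultimately show ?thesis by blast
qed

end
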